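(* Let $k\geq 1$ be an integer. For every natural number $n\geq 1$, $\sigma_k(B_n)\leq B_{\sigma_k(n)}$, and equality holds only if $n=1$.
   Context: The balancing numbers $(B_n)_{n\geq 0}$ are defined by $B_0=0$, $B_1=1$, $B_{n+1}=6B_n-B_{n-1}$ for $n\geq 1$ (so $B_n=\frac{\alpha^n-\beta^n}{\alpha-\beta}$ with $\alpha=3+2\sqrt2$, $\beta=3-2\sqrt2$). For a positive integer $m$, $\sigma_k(m)$ denotes the sum of the $k$-th powers of the positive divisors of $m$. *)

theory Defs
  imports Main
begin

text \<open>Balancing numbers: B 0 = 0, B 1 = 1, B (n+2) = 6 B (n+1) - B n.
  Defined over int (all values are nonnegative).\<close>
fun balancing :: "nat \<Rightarrow> int" where
  "balancing 0 = 0"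
| "balancing (Suc 0) = 1"
| "balancing (Suc (Suc n)) = 6 * balancing (Suc n) - balancing n"

definition divisor_sigma :: "nat \<Rightarrow> nat \<Rightarrow> nat" where
  "divisor_sigma k m = (\<Sum>d\<in>{d. d dvd m \<and> d > 0}. d ^ k)"

end

theory Submission
  imports Defs Complex_Main "HOL-Computational_Algebra.Primes"
begin


lemma B_basic: "0 \<le> balancing j \<and> 5 * balancing j < balancing (Suc j)"
  by (induction j) auto

lemma B_nonneg: "0 \<le> balancing j" using B_basic by blast
lemma B_5: "5 * balancing j < balancing (Suc j)" using B_basic by blast
lemma B_pos: "j \<ge> 1 \<Longrightarrow> 1 \<le> balancing j"
  using B_5[of "j - 1"] B_nonneg[of "j-1"] by (cases j) auto

lemma B_upper: "balancing (Suc j) \<le> 6 ^ j"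
proof (induction j)
  case (Suc j) then show ?case using B_nonneg[of j] by simp
qed simp

lemma B_mono_pow: "5 ^ t * balancing j \<le> balancing (j + t)"
proof (induction t)
  case (Suc t) then show ?case using B_5[of "j+t"] by simp
qed simp

lemma B_mono: "i \<le> j \<Longrightarrow> balancing i \<le> balancing j"
proof -
  assume "i \<le> j"
  then have "balancing j = balancing (i + (j - i))" by simp
  moreover have "1 * balancing i \<le> 5 ^ (j - i) * balancing i"
    using B_nonneg[of i] by (intro mult_right_mono) auto
  ultimately show ?thesis using B_mono_pow[of "j - i" i] by simp
qed

lemma B_add_aux: "\<forall>b. balancing (Suc (a + b)) = balancing (Suc a) * balancing (Suc b) - balancing a * balancing b
   \<and> balancing (Suc (Suc a + b)) = balancing (Suc (Suc a)) * balancing (Suc b) - balancing (Suc a) * balancing b"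
proof (induction a)
  case 0 then show ?case by simp
next
  case (Suc a)
  show ?case
  proof
    fix b
    have h1: "balancing (Suc (a + b)) = balancing (Suc a) * balancing (Suc b) - balancing a * balancing b"
      and h2: "balancing (Suc (Suc a + b)) = balancing (Suc (Suc a)) * balancing (Suc b) - balancing (Suc a) * balancing b"
      using Suc.IH by blast+
    have e: "balancing (Suc (Suc (Suc a) + b)) = 6 * balancing (Suc (Suc a + b)) - balancing (Suc (a + b))"
      by simp
    have "balancing (Suc (Suc (Suc a) + b)) = balancing (Suc (Suc (Suc a))) * balancing (Suc b) - balancing (Suc (Suc a)) * balancing b"
      unfolding e h1 h2 by (simp add: algebra_simps)
    then show "balancing (Suc (Suc a + b)) = balancing (Suc (Suc a)) * balancing (Suc b) - balancing (Suc a) * balancing b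
   \<and> balancing (Suc (Suc (Suc a) + b)) = balancing (Suc (Suc (Suc a))) * balancing (Suc b) - balancing (Suc (Suc a)) * balancing b"
      using h2 by blast
  qed
qed

lemma B_add: "balancing (Suc (a + b)) = balancing (Suc a) * balancing (Suc b) - balancing a * balancing b"
  using B_add_aux by blast

lemma B_ocagne: "balancing (Suc i) * balancing (i + t) - balancing i * balancing (Suc (i + t)) = balancing t"
proof (induction i)
  case (Suc i)
  have "balancing (Suc (Suc i)) * balancing (Suc i + t) - balancing (Suc i) * balancing (Suc (Suc i + t))
     = (6 * balancing (Suc i) - balancing i) * balancing (Suc (i + t)) - balancing (Suc i) * (6 * balancing (Suc (i + t)) - balancing (i + t))"
    by simp
  also have "\<dots> = balancing (Suc i) * balancing (i + t) - balancing i * balancing (Suc (i + t))"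
    by (simp add: algebra_simps)
  also have "\<dots> = balancing t" by (rule Suc.IH)
  finally show ?case .
qed simp

lemma B_cassini: "balancing (Suc j)^2 - 6 * balancing (Suc j) * balancing j + balancing j ^ 2 = 1"
proof (induction j)
  case (Suc j)
  then show ?case by (simp add: algebra_simps power2_eq_square)
qed simp

lemma B_coprime: "coprime (balancing (Suc j)) (balancing j)"
proof -
  have eq: "balancing (Suc j) * (balancing (Suc j) - 6 * balancing j) + balancing j * balancing j = 1"
    using B_cassini[of j] by (simp add: algebra_simps power2_eq_square)
  show ?thesis
  proof -
    let ?g = "gcd (balancing (Suc j)) (balancing j)"
    have "?g dvd balancing (Suc j) * (balancing (Suc j) - 6 * balancing j) + balancing j * balancing j"
      by (intro dvd_add dvd_mult2) auto
    then have "?g dvd 1" using eq by simp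
    then show ?thesis by (simp add: coprime_iff_gcd_eq_1)
  qed
qed


definition Hs :: "nat \<Rightarrow> real" where "Hs m = (\<Sum>d\<in>{1..m}. 1 / real d)"

lemma Hs_le: "m \<ge> 1 \<Longrightarrow> Hs m \<le> 1 + ln (real m)"
proof (induction m rule: dec_induct)
  case base then show ?case by (simp add: Hs_def)
next
  case (step m)
  have "Hs (Suc m) = Hs m + 1 / real (Suc m)"
    by (simp add: Hs_def)
  also have "ln (real m / real (Suc m)) \<le> real m / real (Suc m) - 1"
    using step by (intro ln_le_minus_one) auto
  then have "1 / real (Suc m) \<le> ln (real (Suc m)) - ln (real m)"
    using step by (simp add: ln_divide_pos field_simps)
  then have "Hs m + 1 / real (Suc m) \<le> 1 + ln (real (Suc m))"
    using step.IH by linarith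
  finally show ?case .
qed

lemma ln6: "ln (6::real) \<le> 2"
proof -
  have "5/2 \<le> exp (1::real)" using exp_lower_Taylor_quadratic[of 1] by simp
  then have "(5/2) * (5/2) \<le> exp (1::real) * exp 1"
    by (intro mult_mono) auto
  then have "6 \<le> exp (2::real)" by (simp add: exp_add[symmetric])
  then show ?thesis
    by (metis exp_gt_zero ln_exp ln_le_cancel_iff zero_less_numeral)
qed

abbreviation "Dv m \<equiv> {d::nat. d dvd m \<and> d > 0}"

lemma Dv_sub: "m > 0 \<Longrightarrow> Dv m \<subseteq> {1..m}"
  by (auto dest: dvd_imp_le)

lemma Dv_fin: "m > 0 \<Longrightarrow> finite (Dv m)"
  using Dv_sub finite_subset by blast

lemma sigma_one [simp]: "divisor_sigma k 1 = 1"
proof -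
  have "Dv 1 = {1}" by auto
  then show ?thesis by (simp add: divisor_sigma_def)
qed

lemma sigma_ge: "m \<ge> 2 \<Longrightarrow> m ^ k + 1 \<le> divisor_sigma k m"
proof -
  assume m: "m \<ge> 2"
  have "{1, m} \<subseteq> Dv m" using m by auto
  then have "(\<Sum>d\<in>{1,m}. d ^ k) \<le> (\<Sum>d\<in>Dv m. d ^ k)"
    using Dv_fin[of m] m by (intro sum_mono2) auto
  then show ?thesis using m by (simp add: divisor_sigma_def)
qed

lemma sigma_ge3: "1 < b \<Longrightarrow> b < m \<Longrightarrow> b dvd m \<Longrightarrow> m + b + 1 \<le> divisor_sigma 1 m"
proof -
  assume b: "1 < b" "b < m" "b dvd m"
  have "{1, b, m} \<subseteq> Dv m" using b by auto
  then have "(\<Sum>d\<in>{1,b,m}. d) \<le> (\<Sum>d\<in>Dv m. d)"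
    using Dv_fin[of m] b by (intro sum_mono2) auto
  then show ?thesis using b by (simp add: divisor_sigma_def)
qed

lemma sigma_k_le: "m > 0 \<Longrightarrow> k \<ge> 1 \<Longrightarrow> divisor_sigma k m \<le> m ^ (k - 1) * divisor_sigma 1 m"
proof -
  assume m: "m > 0" and k: "k \<ge> 1"
  have "divisor_sigma k m = (\<Sum>d\<in>Dv m. d ^ (k-1) * d)"
    unfolding divisor_sigma_def using k
    by (intro sum.cong) (auto simp: power_Suc2[symmetric])
  also have "\<dots> \<le> (\<Sum>d\<in>Dv m. m ^ (k-1) * d)"
    using m by (intro sum_mono mult_right_mono power_mono) (auto dest: dvd_imp_le)
  also have "\<dots> = m ^ (k - 1) * divisor_sigma 1 m"
    by (simp add: divisor_sigma_def sum_distrib_left)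
  finally show ?thesis .
qed

lemma sigma1_real: "m > 0 \<Longrightarrow> real (divisor_sigma 1 m) \<le> real m * Hs m"
proof -
  assume m: "m > 0"
  have "divisor_sigma 1 m = (\<Sum>d\<in>Dv m. d)" by (simp add: divisor_sigma_def)
  also have "\<dots> = (\<Sum>d\<in>Dv m. m div d)"
    by (rule sum.reindex_bij_witness[of _ "\<lambda>d. m div d" "\<lambda>d. m div d"])
       (use m in \<open>auto elim!: dvdE simp: dvd_div_mult_self\<close>)
  finally have "real (divisor_sigma 1 m) = (\<Sum>d\<in>Dv m. real m * (1 / real d))"
    by (auto intro!: sum.cong simp: real_of_nat_div)
  also have "\<dots> = real m * (\<Sum>d\<in>Dv m. 1 / real d)"
    by (simp add: sum_distrib_left)
  also have "\<dots> \<le> real m * Hs m"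
    unfolding Hs_def using Dv_sub[OF m]
    by (intro mult_left_mono sum_mono2) auto
  finally show ?thesis .
qed


lemma sub_step:
  assumes q: "prime (q::int)" and h1: "q dvd balancing (c + b)" and h2: "q dvd balancing b"
  shows "q dvd balancing c"
proof (cases b)
  case 0 then show ?thesis using h1 by simp
next
  case (Suc b')
  have e: "balancing (c + Suc b') = balancing (Suc c) * balancing (Suc b') - balancing c * balancing b'"
    using B_add[of c b'] by simp
  have h1': "q dvd balancing (Suc c) * balancing (Suc b') - balancing c * balancing b'"
    using h1 e Suc by simp
  have a1: "q dvd balancing (Suc c) * balancing (Suc b')" using h2 Suc by simp
  have "q dvd balancing (Suc c) * balancing (Suc b') - (balancing (Suc c) * balancing (Suc b') - balancing c * balancing b')"
    using dvd_diff[OF a1 h1'] .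
  then have "q dvd balancing c * balancing b'" by simp
  moreover have "\<not> q dvd balancing b'"
  proof
    assume "q dvd balancing b'"
    with h2 Suc have "q dvd gcd (balancing (Suc b')) (balancing b')" by simp
    moreover have "gcd (balancing (Suc b')) (balancing b') = 1"
      using B_coprime[of b'] by (rule coprime_imp_gcd_eq_1)
    ultimately have "q dvd 1" by metis
    with q show False using not_prime_unit by blast
  qed
  ultimately show ?thesis using q prime_dvd_mult_iff by blast
qed

lemma gcd_step:
  assumes q: "prime (q::int)"
  shows "q dvd balancing a \<Longrightarrow> q dvd balancing b \<Longrightarrow> q dvd balancing (gcd a b)"
proof (induction "a + b" arbitrary: a b rule: less_induct)
  case less
  show ?case
  proof (cases "a = 0 \<or> b = 0")
    case True then show ?thesis using less.prems by auto
  next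
    case False
    show ?thesis
    proof (cases "b \<le> a")
      case True
      have "q dvd balancing (a - b)"
        using sub_step[OF q, of "a - b" b] less.prems True by simp
      then have "q dvd balancing (gcd (a - b) b)"
        using less.hyps[of "a - b" b] less.prems False by simp
      then show ?thesis using True by (simp add: gcd_diff1_nat)
    next
      case F: False
      have "q dvd balancing (b - a)"
        using sub_step[OF q, of "b - a" a] less.prems F by simp
      then have "q dvd balancing (gcd a (b - a))"
        using less.hyps[of a "b - a"] less.prems False F by simp
      then show ?thesis using F by (metis gcd.commute gcd_diff1_nat less_or_eq_imp_le nat_le_linear)
    qed
  qed
qed

lemma rank_bound:
  assumes q: "prime (q::nat)"
  shows "\<exists>j. 1 \<le> j \<and> j \<le> q + 1 \<and> int q dvd balancing j"
proof (rule ccontr)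
  assume H: "\<not> ?thesis"
  have qi: "prime (int q)" using q by (simp add: prime_nat_int_transfer)
  define x where "x j = fst (bezout_coefficients (balancing j) (int q))" for j
  define r where "r j = nat ((x j * balancing (Suc j)) mod int q)" for j
  have qpos: "int q > 0" using q prime_gt_0_nat by simp
  have key: "int q dvd int (r j) * balancing j - balancing (Suc j)" if j: "j \<in> {1..q+1}" for j
  proof -
    have nd: "\<not> int q dvd balancing j" using H j by auto
    have cop: "coprime (int q) (balancing j)" using prime_imp_coprime[OF qi nd] .
    obtain y where "x j * balancing j + y * int q = gcd (balancing j) (int q)"
      using bezout_coefficients_fst_snd[of "balancing j" "int q"] unfolding x_def by blast
    then have xy: "x j * balancing j + y * int q = 1"
      using cop by (simp add: coprime_iff_gcd_eq_1 gcd.commute)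
    have rr: "int (r j) = (x j * balancing (Suc j)) mod int q"
      unfolding r_def using qpos by simp
    have eq: "int (r j) * balancing j - balancing (Suc j)
       = balancing (Suc j) * (x j * balancing j - 1) - (x j * balancing (Suc j) - int (r j)) * balancing j"
      by (simp add: algebra_simps)
    have "x j * balancing j - 1 = - (y * int q)" using xy by simp
    then have t1: "int q dvd balancing (Suc j) * (x j * balancing j - 1)" by simp
    have "int q dvd x j * balancing (Suc j) - int (r j)" unfolding rr by (rule dvd_minus_mod)
    then have t2: "int q dvd (x j * balancing (Suc j) - int (r j)) * balancing j" by simp
    show ?thesis unfolding eq using t1 t2 by (rule dvd_diff)
  qed
  have "r ` {1..q+1} \<subseteq> {0..<q}"
    using qpos by (auto simp: r_def nat_less_iff)
  moreover have "\<not> card {1..q+1} \<le> card {0..<q}" by simp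
  ultimately have "\<not> inj_on r {1..q+1}"
    using card_inj_on_le[of r "{1..q+1}" "{0..<q}"] by auto
  then obtain i j where ij: "i \<in> {1..q+1}" "j \<in> {1..q+1}" "i \<noteq> j" "r i = r j"
    unfolding inj_on_def by blast
  have gen: "False" if a: "i \<in> {1..q+1}" "j \<in> {1..q+1}" "i < j" "r i = r j" for i j
  proof -
    have d1: "int q dvd int (r i) * balancing i - balancing (Suc i)" using key a by blast
    have d2: "int q dvd int (r i) * balancing j - balancing (Suc j)" using key a by simp
    have "balancing (Suc i) * balancing j - balancing i * balancing (Suc j)
       = balancing i * (int (r i) * balancing j - balancing (Suc j)) - balancing j * (int (r i) * balancing i - balancing (Suc i))"
      by (simp add: algebra_simps)
    then have "int q dvd balancing (Suc i) * balancing j - balancing i * balancing (Suc j)"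
      using d1 d2 by simp
    moreover have "balancing (Suc i) * balancing (i + (j - i)) - balancing i * balancing (Suc (i + (j - i))) = balancing (j - i)"
      by (rule B_ocagne)
    ultimately have "int q dvd balancing (j - i)" using a by simp
    moreover have "1 \<le> j - i" "j - i \<le> q + 1" using a by auto
    ultimately show False using H by blast
  qed
  show False
  proof (cases "i < j")
    case True then show ?thesis using ij by (intro gen[of i j]) auto
  next
    case False then have "j < i" using ij by simp
    then show ?thesis using ij by (intro gen[of j i]) auto
  qed
qed

lemma prime_factor_large:
  assumes p: "prime (p::nat)" and q: "prime (q::nat)" and d: "int q dvd balancing p"
  shows "p \<le> q + 1"
proof -
  obtain j where j: "1 \<le> j" "j \<le> q + 1" "int q dvd balancing j" using rank_bound[OF q] by blast
  have qi: "prime (int q)" using q by (simp add: prime_nat_int_transfer)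
  have g: "int q dvd balancing (gcd p j)" using gcd_step[OF qi d j(3)] .
  show ?thesis
  proof (cases "p dvd j")
    case True
    have "p \<le> j" using True j(1) by (intro dvd_imp_le) auto
    then show ?thesis using j(2) by linarith
  next
    case False
    then have "coprime p j" using prime_imp_coprime[OF p] by blast
    then have "gcd p j = 1" by (rule coprime_imp_gcd_eq_1)
    with g have "int q dvd 1" by simp
    with qi show ?thesis using not_prime_unit by blast
  qed
qed



lemma sigma_mult_prime:
  assumes q: "prime (q::nat)" and m: "m > 0"
  shows "divisor_sigma 1 (q * m) \<le> (1 + q) * divisor_sigma 1 m"
proof -
  have sub: "Dv (q * m) \<subseteq> Dv m \<union> (\<lambda>d. q * d) ` Dv m"
  proof
    fix d assume d: "d \<in> Dv (q * m)"
    show "d \<in> Dv m \<union> (\<lambda>d. q * d) ` Dv m"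
    proof (cases "q dvd d")
      case True
      then obtain e where e: "d = q * e" by (elim dvdE)
      have "e dvd m" using d e q by (auto simp: prime_gt_0_nat)
      moreover have "e > 0" using d e by auto
      ultimately show ?thesis using e by auto
    next
      case False
      then have "coprime q d" using prime_imp_coprime[OF q] by blast
      then have "d dvd m" using d by (metis coprime_commute coprime_dvd_mult_right_iff mem_Collect_eq)
      then show ?thesis using d by auto
    qed
  qed
  have fin: "finite (Dv m)" using Dv_fin[OF m] .
  have "divisor_sigma 1 (q * m) = (\<Sum>d\<in>Dv (q*m). d)" by (simp add: divisor_sigma_def)
  also have "\<dots> \<le> (\<Sum>d\<in>Dv m \<union> (\<lambda>d. q * d) ` Dv m. d)"
    using sub fin by (intro sum_mono2) auto
  also have "\<dots> \<le> (\<Sum>d\<in>Dv m. d) + (\<Sum>d\<in>(\<lambda>d. q * d) ` Dv m. d)"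
    using fin by (simp add: sum_Un_nat)
  also have "(\<Sum>d\<in>(\<lambda>d. q * d) ` Dv m. d) \<le> (\<Sum>d\<in>Dv m. q * d)"
    using sum_image_le[OF fin, of "\<lambda>d. d" "\<lambda>d. q * d"] by (simp add: o_def)
  also have "(\<Sum>d\<in>Dv m. d) + (\<Sum>d\<in>Dv m. q * d) = (1 + q) * divisor_sigma 1 m"
    by (simp add: divisor_sigma_def sum_distrib_left sum.distrib[symmetric] algebra_simps)
  finally show ?thesis by simp
qed

lemma sigma_bound:
  fixes Q :: nat
  shows "m > 0 \<Longrightarrow> (\<forall>q. prime q \<longrightarrow> q dvd m \<longrightarrow> Q \<le> q) \<Longrightarrow>
    \<exists>r. Q ^ r \<le> m \<and> divisor_sigma 1 m * Q ^ r \<le> m * (Q + 1) ^ r"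
proof (induction m rule: less_induct)
  case (less m)
  show ?case
  proof (cases "m = 1")
    case True then show ?thesis using sigma_one[of 1] by (intro exI[of _ 0]) auto
  next
    case False
    obtain q where q: "prime q" "q dvd m" using prime_factor_nat[OF False] by blast
    obtain m' where m': "m = q * m'" using q(2) by (elim dvdE)
    have qg: "q > 1" using q(1) prime_gt_1_nat by blast
    have m'pos: "m' > 0" using less.prems(1) m' by (cases "m' = 0") auto
    have "m' < m" using m' qg m'pos by simp
    moreover have "\<forall>q'. prime q' \<longrightarrow> q' dvd m' \<longrightarrow> Q \<le> q'"
      using less.prems(2) m' by auto
    ultimately obtain r where r: "Q ^ r \<le> m'" "divisor_sigma 1 m' * Q ^ r \<le> m' * (Q + 1) ^ r"
      using less.IH m'pos by blast
    have Qq: "Q \<le> q" using less.prems(2) q by blast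
    have "Q ^ Suc r = Q * Q ^ r" by simp
    also have "\<dots> \<le> q * m'" using Qq r(1) by (intro mult_mono) auto
    finally have c1: "Q ^ Suc r \<le> m" using m' by simp
    have "divisor_sigma 1 m * Q ^ Suc r \<le> (1 + q) * divisor_sigma 1 m' * (Q * Q ^ r)"
      using sigma_mult_prime[OF q(1) m'pos] m' by (simp add: mult_right_mono)
    also have "\<dots> = ((1 + q) * Q) * (divisor_sigma 1 m' * Q ^ r)" by (simp add: algebra_simps)
    also have "\<dots> \<le> (q * (Q + 1)) * (m' * (Q + 1) ^ r)"
    proof (rule mult_mono[OF _ r(2)])
      show "(1 + q) * Q \<le> q * (Q + 1)" using Qq by (simp add: algebra_simps)
    qed auto
    also have "\<dots> = m * (Q + 1) ^ Suc r" using m' by (simp add: algebra_simps)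
    finally show ?thesis using c1 by blast
  qed
qed

lemma B_super: "a \<ge> 1 \<Longrightarrow> 4 * balancing x * balancing a \<le> balancing (x + a)"
proof -
  assume a: "a \<ge> 1"
  then obtain a' where a': "a = Suc a'" by (cases a) auto
  have e: "balancing (x + a) = balancing (Suc a') * balancing (Suc x) - balancing a' * balancing x"
    using B_add[of a' x] a' by (simp add: add.commute)
  have "balancing a' \<le> balancing (Suc a')" by (rule B_mono) simp
  then have "balancing a' * balancing x \<le> balancing (Suc a') * balancing x"
    using B_nonneg[of x] by (rule mult_right_mono)
  moreover have "balancing (Suc a') * (5 * balancing x) \<le> balancing (Suc a') * balancing (Suc x)"
    using B_5[of x] B_nonneg[of "Suc a'"] by (intro mult_left_mono) auto
  ultimately show ?thesis using e a' by (simp add: algebra_simps)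
qed

lemma B_multpow: "j \<ge> 1 \<Longrightarrow> a \<ge> 1 \<Longrightarrow> 4 ^ (j - 1) * balancing a ^ j \<le> balancing (a * j)"
proof (induction j rule: dec_induct)
  case base then show ?case by simp
next
  case (step j)
  have "4 ^ (Suc j - 1) * balancing a ^ Suc j = 4 * (4 ^ (j - 1) * balancing a ^ j) * balancing a"
    using step(1) by (cases j) (auto simp: algebra_simps)
  also have "\<dots> \<le> 4 * balancing (a * j) * balancing a"
    using step B_nonneg[of a] by (intro mult_right_mono mult_left_mono) auto
  also have "\<dots> \<le> balancing (a * j + a)" using B_super step(4) by blast
  finally show ?case by (simp add: algebra_simps)
qed



lemma m_le: "n \<ge> 1 \<Longrightarrow> balancing n \<le> 6 ^ (n - 1)"
  using B_upper[of "n - 1"] by simp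

lemma sig1_B:
  assumes n: "n \<ge> 2"
  shows "divisor_sigma 1 (nat (balancing n)) \<le> (2 * n - 1) * nat (balancing n)"
proof -
  define m where "m = nat (balancing n)"
  have mi: "int m = balancing n" unfolding m_def using B_nonneg[of n] by simp
  have m1: "m \<ge> 1" using B_pos[of n] n mi by linarith
  have m6: "real m \<le> 6 ^ (n - 1)"
  proof -
    have "int m \<le> 6 ^ (n - 1)" using m_le[of n] n mi by simp
    then have "m \<le> 6 ^ (n - 1)" by (metis of_nat_le_iff of_nat_numeral of_nat_power)
    then show ?thesis by (metis of_nat_le_iff of_nat_numeral of_nat_power)
  qed
  have "ln (real m) \<le> ln ((6::real) ^ (n - 1))"
    using m1 m6 by (subst ln_le_cancel_iff) auto
  also have "\<dots> = real (n - 1) * ln 6" by (simp add: ln_realpow)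
  also have "\<dots> \<le> real (n - 1) * 2" using ln6 by (intro mult_left_mono) auto
  finally have lnm: "ln (real m) \<le> real (n - 1) * 2" .
  have "real (divisor_sigma 1 m) \<le> real m * Hs m" using sigma1_real[of m] m1 by simp
  also have "\<dots> \<le> real m * (1 + ln (real m))" using Hs_le[OF m1] by (intro mult_left_mono) auto
  also have "\<dots> \<le> real m * (1 + real (n - 1) * 2)" using lnm by (intro mult_left_mono) auto
  also have "\<dots> = real ((2 * n - 1) * m)" using n by (simp add: of_nat_diff)
  finally have "divisor_sigma 1 m \<le> (2 * n - 1) * m" by (simp only: of_nat_le_iff)
  then show ?thesis unfolding m_def .
qed

lemma sigk_B:
  assumes n: "n \<ge> 2" and k: "k \<ge> 1"
  shows "divisor_sigma k (nat (balancing n)) \<le> (2 * n - 1) * nat (balancing n) ^ k"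
proof -
  define m where "m = nat (balancing n)"
  have m1: "m \<ge> 1" unfolding m_def using B_pos[of n] n by linarith
  have "divisor_sigma k m \<le> m ^ (k - 1) * divisor_sigma 1 m" using sigma_k_le[of m k] m1 k by simp
  also have "\<dots> \<le> m ^ (k - 1) * ((2 * n - 1) * m)" using sig1_B[OF n] unfolding m_def by simp
  also have "\<dots> = (2 * n - 1) * m ^ k" using k by (cases k) (auto simp: algebra_simps)
  finally show ?thesis unfolding m_def .
qed

lemma pow_aux1: "k \<ge> 1 \<Longrightarrow> k \<le> 2 ^ (k - 1)"
proof (induction k rule: dec_induct)
  case (step k) then show ?case by (cases k) auto
qed simp

lemma pow_aux2: "n \<ge> 1 \<Longrightarrow> 2 * n < 5 * 4 ^ (n - 1)"
proof (induction n rule: dec_induct)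
  case (step n) then show ?case by (cases n) auto
qed simp

lemma pow_aux3: "2 * c * c < (5::nat) ^ (c + 1)"
proof (induction c)
  case (Suc c)
  have "c < 5 ^ c" by (induction c) auto
  then show ?case using Suc by simp
qed simp

lemma main_lt:
  assumes k: "k \<ge> 1" and n: "n \<ge> 2"
  shows "int (divisor_sigma k (nat (balancing n))) < balancing (divisor_sigma k n)"
proof -
  define m where "m = nat (balancing n)"
  have mi: "int m = balancing n" unfolding m_def using B_nonneg[of n] by simp
  have m1: "m \<ge> 1" using B_pos[of n] n mi by linarith
  define S where "S = divisor_sigma k n"
  have S: "n ^ k + 1 \<le> S" unfolding S_def using sigma_ge[OF n] .
  have T: "divisor_sigma k m \<le> (2 * n - 1) * m ^ k" unfolding m_def using sigk_B[OF n k] .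
  have B5n: "5 * balancing n < balancing (Suc n)" by (rule B_5)
  have BS1: "balancing (Suc n) \<le> balancing S"
  proof (rule B_mono)
    have "n ^ 1 \<le> n ^ k" using k n by (intro power_increasing) auto
    then show "Suc n \<le> S" using S by simp
  qed
  show ?thesis
  proof (cases "k \<ge> 2")
    case True
    define j where "j = n ^ (k - 1)"
    have nk: "n ^ k = n * j" unfolding j_def using k by (cases k) auto
    have j1: "j \<ge> 1" unfolding j_def using n by simp
    have jk: "k \<le> j" unfolding j_def using pow_aux1[OF k] n
      by (meson le_trans power_mono zero_le_numeral)
    have jn: "n \<le> j"
    proof -
      have "n ^ 1 \<le> n ^ (k - 1)" using True n by (intro power_increasing) auto
      then show ?thesis unfolding j_def by simp
    qed
    have "int (divisor_sigma k m) \<le> int ((2 * n - 1) * m ^ k)" using T of_nat_le_iff by blast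
    also have "\<dots> = int (2 * n - 1) * (balancing n) ^ k" using mi by simp
    also have "\<dots> < 5 * 4 ^ (n - 1) * (balancing n) ^ k"
    proof (rule mult_strict_right_mono)
      have h: "2 * n - 1 < 5 * 4 ^ (n - 1)" using pow_aux2[of n] n by simp
      have "int (2 * n - 1) < int (5 * 4 ^ (n - 1))" using h by (simp only: of_nat_less_iff)
      then show "int (2 * n - 1) < 5 * 4 ^ (n - 1)" by simp
      show "0 < balancing n ^ k" using B_pos[of n] n by simp
    qed
    also have "\<dots> \<le> 5 * 4 ^ (j - 1) * (balancing n) ^ j"
    proof (intro mult_mono mult_left_mono)
      show "(4::int) ^ (n - 1) \<le> 4 ^ (j - 1)" using jn by (intro power_increasing) auto
      show "balancing n ^ k \<le> balancing n ^ j" using jk B_pos[of n] n by (intro power_increasing) auto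
    qed (use B_pos[of n] n in auto)
    also have "\<dots> \<le> 5 * balancing (n * j)"
      using B_multpow[OF j1, of n] n by simp
    also have "\<dots> < balancing (Suc (n * j))" by (rule B_5)
    also have "\<dots> \<le> balancing S" using S nk by (intro B_mono) simp
    finally show ?thesis unfolding S_def m_def .
  next
    case False
    then have k1: "k = 1" using k by simp
    have T1: "divisor_sigma 1 m \<le> (2 * n - 1) * m" using T k1 by simp
    show ?thesis
    proof (cases "n \<le> 3")
      case True
      have "int (divisor_sigma 1 m) \<le> int ((2 * n - 1) * m)" using T1 of_nat_le_iff by blast
      also have "\<dots> = int (2 * n - 1) * balancing n" using mi by simp
      also have "\<dots> \<le> 5 * balancing n"
      proof (rule mult_right_mono)
        show "int (2 * n - 1) \<le> 5" using True n by (simp add: of_nat_diff)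
      qed (rule B_nonneg)
      also have "\<dots> < balancing S" using B5n BS1 by simp
      finally show ?thesis using k1 unfolding m_def S_def by simp
    next
      case n3: False
      show ?thesis
      proof (cases "prime n")
        case False
        then obtain a where a: "a dvd n" "a \<noteq> 1" "a \<noteq> n"
          using n by (auto simp: prime_nat_iff)
        obtain b where b: "n = a * b" using a(1) by (elim dvdE)
        have a1: "1 < a" using a b n by (cases a) auto
        have b1: "1 < b" using a b n by (cases b) auto
        define c where "c = max a b"
        have c: "1 < c" "c < n" "c dvd n" using a1 b1 b a unfolding c_def max_def by auto
        have nc: "n \<le> c * c" unfolding c_def b by (intro mult_mono) auto
        have S2: "n + c + 1 \<le> S" unfolding S_def using k1 sigma_ge3[OF c] by simp
        have "int (divisor_sigma 1 m) \<le> int ((2 * n - 1) * m)" using T1 of_nat_le_iff by blast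
        also have "\<dots> = int (2 * n - 1) * balancing n" using mi by simp
        also have "\<dots> < 5 ^ (c + 1) * balancing n"
        proof (rule mult_strict_right_mono)
          have "2 * n < 5 ^ (c + 1)" using pow_aux3[of c] nc by linarith
          then have "2 * n - 1 < 5 ^ (c + 1)" by simp
          then have "int (2 * n - 1) < int (5 ^ (c + 1))" by (simp only: of_nat_less_iff)
          then show "int (2 * n - 1) < 5 ^ (c + 1)" by simp
          show "0 < balancing n" using B_pos[of n] n by simp
        qed
        also have "\<dots> \<le> balancing (n + (c + 1))" by (rule B_mono_pow)
        also have "\<dots> \<le> balancing S" using S2 by (intro B_mono) simp
        finally show ?thesis using k1 unfolding m_def S_def by simp
      next
        case True
        have n5: "n \<ge> 5"
        proof -
          have "n \<noteq> 4" using True by (auto simp: prime_nat_iff dvd_def intro!: exI[of _ 2])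
          then show ?thesis using n3 by simp
        qed
        have odd_n: "odd n" using True n5 prime_odd_nat by simp
        have qbig: "\<forall>q. prime q \<longrightarrow> q dvd m \<longrightarrow> n \<le> q"
        proof (intro allI impI)
          fix q assume q: "prime q" "q dvd m"
          have "int q dvd balancing n" using q(2) mi by (metis of_nat_dvd_iff)
          then have "n \<le> q + 1" using prime_factor_large[OF True q(1)] by simp
          moreover have "q \<noteq> n - 1"
          proof
            assume "q = n - 1"
            then have "even q" using odd_n n5 by simp
            moreover have "q > 2" using \<open>q = n - 1\<close> n5 by simp
            ultimately show False using q(1) prime_odd_nat by auto
          qed
          ultimately show "n \<le> q" by simp
        qed
        obtain r where r: "n ^ r \<le> m" "divisor_sigma 1 m * n ^ r \<le> m * (n + 1) ^ r"
          using sigma_bound[of m n] m1 qbig by auto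
        have mlt: "m < n ^ (n + 1)"
        proof -
          have "int m \<le> 6 ^ (n - 1)" using m_le[of n] n mi by simp
          then have m6: "m \<le> 6 ^ (n - 1)" by (metis of_nat_le_iff of_nat_numeral of_nat_power)
          have "6 ^ (n - 1) < n ^ (n + 1)"
          proof (cases "n = 5")
            case True then show ?thesis by simp
          next
            case False
            then have "n \<ge> 6" using n5 by simp
            then have "6 ^ (n - 1) \<le> n ^ (n - 1)" by (intro power_mono) auto
            also have "\<dots> < n ^ (n + 1)" using n5 by (intro power_strict_increasing) auto
            finally show ?thesis .
          qed
          then show ?thesis using m6 by simp
        qed
        have rn: "r \<le> n"
        proof (rule ccontr)
          assume "\<not> r \<le> n"
          then have "n ^ (n + 1) \<le> n ^ r" using n by (intro power_increasing) auto
          then show False using r(1) mlt by simp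
        qed
        have "real (divisor_sigma 1 m) * real n ^ r \<le> real m * (real n + 1) ^ r"
          using r(2) by (metis of_nat_1 of_nat_add of_nat_le_iff of_nat_mult of_nat_power)
        then have sg: "real (divisor_sigma 1 m) \<le> real m * ((real n + 1) / real n) ^ r"
          using n by (simp add: field_simps power_divide)
        have "((real n + 1) / real n) ^ r \<le> ((real n + 1) / real n) ^ n"
          using rn n by (intro power_increasing) (auto simp: field_simps)
        also have "((real n + 1) / real n) = 1 + 1 / real n" using n by (simp add: field_simps)
        also have "(1 + 1 / real n) ^ n \<le> exp 1"
          by (rule exp_ge_one_plus_x_over_n_power_n) (use n in auto)
        also have "exp (1::real) \<le> 3" by (rule exp_le)
        finally have pw0: "(1 + 1 / real n) ^ r \<le> 3" .
        have "((real n + 1) / real n) = 1 + 1 / real n" using n by (simp add: field_simps)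
        then have pw: "((real n + 1) / real n) ^ r \<le> 3" using pw0 by simp
        have "real (divisor_sigma 1 m) \<le> real m * 3"
          using sg mult_left_mono[OF pw, of "real m"] by simp
        then have "divisor_sigma 1 m \<le> 3 * m" by linarith
        then have "int (divisor_sigma 1 m) \<le> 3 * balancing n" using mi by linarith
        also have "\<dots> < balancing S" using B5n BS1 B_pos[of n] n by simp
        finally show ?thesis using k1 unfolding m_def S_def by simp
      qed
    qed
  qed
qed


theorem theorem3p1:
  fixes k n :: nat
  assumes "k \<ge> 1" and "n \<ge> 1"
  shows "int (divisor_sigma k (nat (balancing n))) \<le> balancing (divisor_sigma k n)
         \<and> (int (divisor_sigma k (nat (balancing n))) = balancing (divisor_sigma k n) \<longrightarrow> n = 1)"
proof (cases "n = 1")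
  case True
  have e: "nat (balancing 1) = 1" by simp
  show ?thesis unfolding True e sigma_one by simp
next
  case False
  then have "n \<ge> 2" using assms(2) by simp
  then have "int (divisor_sigma k (nat (balancing n))) < balancing (divisor_sigma k n)"
    using main_lt assms(1) by blast
  then show ?thesis by simp
qed

end
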